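(* Let $\theta\in(0,\pi/2)$ and $|\psi_1\rangle=\cos\theta|00\rangle+\sin\theta|11\rangle$. Then there exist unit vectors $\hat a_1,\hat a_2,\hat a_3\in\mathbb R^3$ and an orthonormal triple $\hat b_1,\hat b_2,\hat b_3\in\mathbb R^3$ such that $\frac13\sum_{k=1}^3\langle\psi_1|(\hat a_k\cdot\vec\sigma)\otimes(\hat b_k\cdot\vec\sigma)|\psi_1\rangle=\frac{2+\sqrt{1+2\sin^2 2\theta}}{3\sqrt3}>\frac1{\sqrt3}.$
   Context: $\vec\sigma=(\sigma_x,\sigma_y,\sigma_z)$ is the vector of Pauli matrices; the first tensor factor is Alice's qubit, the second Bob's; $\{|0\rangle,|1\rangle\}$ is the computational basis. The number $1/\sqrt3$ is the local-hidden-state bound of the 3-setting linear steering inequality $\frac13\sum_{k=1}^3\langle A_k(\hat b_k\cdot\vec\sigma^B)\rangle\le\frac1{\sqrt3}$ with mutually orthogonal $\hat b_k$. *)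

theory Defs
  imports "HOL-Analysis.Analysis"
begin

text \<open>Complex matrices as functions on indices (2x2 for one qubit, 4x4 for two qubits).
  Computational basis: one qubit index 0,1 for |0>,|1>; two-qubit index 2*a+b for |ab>,
  first factor = Alice.\<close>

type_synonym cmat = "nat \<Rightarrow> nat \<Rightarrow> complex"
type_synonym cvec = "nat \<Rightarrow> complex"

definition pauli_x :: cmat where
  "pauli_x i j = (if i = 0 \<and> j = 1 then 1 else if i = 1 \<and> j = 0 then 1 else 0)"

definition pauli_y :: cmat where
  "pauli_y i j = (if i = 0 \<and> j = 1 then -\<i> else if i = 1 \<and> j = 0 then \<i> else 0)"

definition pauli_z :: cmat where
  "pauli_z i j = (if i = 0 \<and> j = 0 then 1 else if i = 1 \<and> j = 1 then -1 else 0)"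

definition sigma_dot :: "real^3 \<Rightarrow> cmat" where
  "sigma_dot n i j = of_real (n $ 1) * pauli_x i j + of_real (n $ 2) * pauli_y i j
                      + of_real (n $ 3) * pauli_z i j"

definition kron2 :: "cmat \<Rightarrow> cmat \<Rightarrow> cmat" where
  "kron2 A B i j = A (i div 2) (j div 2) * B (i mod 2) (j mod 2)"

definition expect4 :: "cvec \<Rightarrow> cmat \<Rightarrow> complex" where
  "expect4 \<psi> M = (\<Sum>i<4. \<Sum>j<4. cnj (\<psi> i) * M i j * \<psi> j)"

definition psi1 :: "real \<Rightarrow> cvec" where
  "psi1 \<theta> i = (if i = 0 then of_real (cos \<theta>) else if i = 3 then of_real (sin \<theta>) else 0)"

end

theory Submission
  imports Defs
begin

lemma expect_formula:
  "expect4 (psi1 t) (kron2 (sigma_dot a) (sigma_dot b))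
   = complex_of_real (a$3*b$3 + sin(2*t)*(a$1*b$1 - a$2*b$2))"
proof -
  have s2: "sin (2*t) = 2 * sin t * cos t" by (simp add: sin_double)
  have e: "expect4 (psi1 t) (kron2 (sigma_dot a) (sigma_dot b)) =
     of_real (cos t)^2 * of_real (a$3*b$3) + of_real (sin t)^2 * of_real (a$3*b$3)
     + of_real (cos t * sin t) * ((of_real (a$1) - \<i> * of_real (a$2)) * (of_real (b$1) - \<i> * of_real (b$2))
         + (of_real (a$1) + \<i> * of_real (a$2)) * (of_real (b$1) + \<i> * of_real (b$2)))"
  proof -
    have "expect4 (psi1 t) M = of_real (cos t) * M 0 0 * of_real (cos t) + of_real (cos t) * M 0 3 * of_real (sin t)
       + of_real (sin t) * M 3 0 * of_real (cos t) + of_real (sin t) * M 3 3 * of_real (sin t)" for M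
      unfolding expect4_def psi1_def by (simp add: numeral_eq_Suc lessThan_Suc)
    moreover have "kron2 A B 0 0 = A 0 0 * B 0 0" "kron2 A B 0 3 = A 0 1 * B 0 1"
      "kron2 A B 3 0 = A 1 0 * B 1 0" "kron2 A B 3 3 = A 1 1 * B 1 1" for A B
      unfolding kron2_def by simp_all
    ultimately show ?thesis
      unfolding sigma_dot_def pauli_x_def pauli_y_def pauli_z_def
      by (simp add: algebra_simps power2_eq_square)
  qed
  also have "... = of_real (cos t * cos t * (a$3*b$3) + sin t * sin t * (a$3*b$3) + 2 * sin t * cos t * (a$1*b$1 - a$2*b$2))"
    by (simp add: algebra_simps power2_eq_square)
  also have "cos t * cos t * (a$3*b$3) + sin t * sin t * (a$3*b$3) + 2 * sin t * cos t * (a$1*b$1 - a$2*b$2) = a$3*b$3 + sin(2*t)*(a$1*b$1 - a$2*b$2)"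
  proof -
    have h: "cos t * cos t + sin t * sin t = 1" using sin_cos_squared_add[of t] by (simp add: power2_eq_square)
    have "cos t * cos t * (a$3*b$3) + sin t * sin t * (a$3*b$3) + 2 * sin t * cos t * (a$1*b$1 - a$2*b$2) - (a$3*b$3 + sin(2*t)*(a$1*b$1 - a$2*b$2)) = (cos t * cos t + sin t * sin t - 1) * (a$3*b$3)"
      unfolding s2 by algebra
    then show ?thesis using h by simp
  qed
  finally show ?thesis .
qed

lemma inner3: "(x::real^3) \<bullet> y = x$1*y$1 + x$2*y$2 + x$3*y$3"
  by (simp add: inner_vec_def sum_3)

lemma norm3: "norm (x::real^3) = sqrt (x$1*x$1 + x$2*x$2 + x$3*x$3)"
  by (simp add: norm_eq_sqrt_inner inner3)

theorem mainTheorem8: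
  fixes \<theta> :: real
  assumes "0 < \<theta>" and "\<theta> < pi / 2"
  shows "\<exists>a b :: nat \<Rightarrow> real^3.
           (\<forall>k\<in>{1..3}. norm (a k) = 1) \<and>
           (\<forall>k\<in>{1..3}. \<forall>l\<in>{1..3}. b k \<bullet> b l = (if k = l then 1 else 0)) \<and>
           (1/3) * (\<Sum>k=1..3. expect4 (psi1 \<theta>) (kron2 (sigma_dot (a k)) (sigma_dot (b k))))
             = complex_of_real ((2 + sqrt (1 + 2 * (sin (2 * \<theta>))^2)) / (3 * sqrt 3)) \<and>
           (2 + sqrt (1 + 2 * (sin (2 * \<theta>))^2)) / (3 * sqrt 3) > 1 / sqrt 3"
proof -
  define s where "s = sin (2*\<theta>)"
  define r where "r = sqrt (1 + 2 * s ^ 2)"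
  have spos: "s > 0" unfolding s_def using assms by (intro sin_gt_zero) auto
  have r2: "r^2 = 1 + 2 * s ^ 2" unfolding r_def by simp
  have rpos: "r > 0" unfolding r_def by (simp add: add_pos_nonneg)
  have r1: "r > 1" unfolding r_def using spos by (simp add: real_less_rsqrt)
  have q3: "sqrt 3 * sqrt 3 = (3::real)" by simp
  have q2: "sqrt 2 * sqrt 2 = (2::real)" by simp
  have q6: "sqrt 6 = sqrt 2 * sqrt (3::real)" by (simp flip: real_sqrt_mult)
  have q3p: "sqrt (3::real) > 0" by simp
  have q2p: "sqrt (2::real) > 0" by simp
  define a :: "nat \<Rightarrow> real^3" where
    "a k = (if k = 1 then vector [s * sqrt 2/r, 0, 1/r] else vector [0,0,1])" for k
  define b :: "nat \<Rightarrow> real^3" where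
    "b k = (if k = 1 then vector [sqrt 2/sqrt 3, 0, 1/sqrt 3]
            else if k = 2 then vector [-1/(sqrt 2 * sqrt 3), 1/sqrt 2, 1/sqrt 3]
            else vector [-1/(sqrt 2 * sqrt 3), -1/sqrt 2, 1/sqrt 3])" for k
  have A: "\<forall>k\<in>{1..3}. norm (a k) = 1"
  proof
    fix k :: nat assume "k \<in> {1..3}"
    have "(s * sqrt 2/r)*(s * sqrt 2/r) + 1/r*(1/r) = (s * s*(sqrt 2* sqrt 2) + 1)/(r*r)"
      using rpos by (simp add: field_simps)
    also have "... = 1"
    proof -
      have rr: "r*r = s * s*(sqrt 2 * sqrt 2)+1" using r2 by (simp add: q2 power2_eq_square algebra_simps)
      show ?thesis using rpos unfolding rr[symmetric] by simp
    qed
    finally have "(s * sqrt 2/r)*(s * sqrt 2/r) + 1/r*(1/r) = 1" .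
    then show "norm (a k) = 1" unfolding a_def norm3 by simp
  qed
  have B: "\<forall>k\<in>{1..3}. \<forall>l\<in>{1..3}. b k \<bullet> b l = (if k = l then 1 else 0)"
  proof (intro ballI)
    fix k l :: nat assume "k \<in> {1..3}" "l \<in> {1..3}"
    then have "k \<in> {1,2,3}" "l \<in> {1,2,3}" by auto
    then show "b k \<bullet> b l = (if k = l then 1 else 0)"
      unfolding b_def inner3 using q2p q3p
      by (auto simp: field_simps q2 q3)
  qed
  have C: "(1/3) * (\<Sum>k=1..3. expect4 (psi1 \<theta>) (kron2 (sigma_dot (a k)) (sigma_dot (b k))))
             = complex_of_real ((2 + r) / (3 * sqrt 3))"
  proof -
    have sum: "(\<Sum>k=1..3. f k) = f 1 + f 2 + f (3::nat)" for f :: "nat \<Rightarrow> complex"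
      by (simp add: numeral_eq_Suc)
    have "1/r*(1/sqrt 3) + s*(s * sqrt 2/r*(sqrt 2/sqrt 3)) + 1/sqrt 3 + 1/sqrt 3
          = (2 + r) / sqrt 3"
    proof -
      have rr: "r * (r * sqrt 3) = sqrt 3 + s * (s * (2 * sqrt 3))"
      proof -
        have "r * (r * sqrt 3) = (r * r) * sqrt 3" by (simp only: mult.assoc)
        also have "... = (1 + 2 * s * s) * sqrt 3" using r2 by (simp add: power2_eq_square)
        finally show ?thesis by (simp add: algebra_simps)
      qed
      show ?thesis
        using rpos q3p by (simp add: field_simps power2_eq_square q2 mult.assoc mult.left_commute[of _ "sqrt 2"] rr)
    qed
    then show ?thesis
      unfolding sum expect_formula a_def b_def s_def[symmetric]
      by (simp flip: of_real_add of_real_mult add: field_simps) (simp add: algebra_simps)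
  qed
  have D: "(2 + r) / (3 * sqrt 3) > 1 / sqrt 3"
    using r1 q3p by (simp add: field_simps)
  show ?thesis using A B C D unfolding r_def s_def by blast
qed

end
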